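(* Let $\chi:T\to\overline{\mathbf F}_p^\times$ be a smooth character, viewed as a character of $P$, and let $\pi$ be a smooth representation of $G$. If $\mathrm{Hom}_P(\chi,\pi)\neq0$, then $\chi$ extends uniquely to a character of $G$, and (for this extension) $\mathrm{Hom}_P(\chi,\pi)=\mathrm{Hom}_G(\chi,\pi)$.
   Context: $F$ non-Archimedean local field of residual characteristic $p$, $G=\mathrm{GL}_2(F)$, $P$ the upper triangular Borel subgroup, $U$ its unipotent radical, $T$ the diagonal torus; characters of $T$ are viewed as characters of $P$ via $P\to P/U\cong T$. Representations are smooth on $\overline{\mathbf F}_p$-vector spaces. *)

theory Defs
  imports Main "HOL-Computational_Algebra.Polynomial"
begin

text \<open>A discrete valuation v on F (values on nonzero elements only);
  vball v n = elements of valuation at least n (together with 0), i.e. the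
  fractional ideal generated by the n-th power of a uniformiser.\<close>

definition vball :: "('f::field \<Rightarrow> int) \<Rightarrow> int \<Rightarrow> 'f set" where
  "vball v n = {x. x = 0 \<or> v x \<ge> n}"

definition residue_classes :: "('f::field \<Rightarrow> int) \<Rightarrow> 'f set set" where
  "residue_classes v = (\<lambda>x. {y \<in> vball v 0. x - y \<in> vball v 1}) ` vball v 0"

definition nonarch_local_field :: "('f::field \<Rightarrow> int) \<Rightarrow> nat \<Rightarrow> bool" where
  "nonarch_local_field v p \<longleftrightarrow>
     prime p \<and>
     (\<forall>x y. x \<noteq> 0 \<longrightarrow> y \<noteq> 0 \<longrightarrow> v (x * y) = v x + v y) \<and>
     (\<forall>x y. x \<noteq> 0 \<longrightarrow> y \<noteq> 0 \<longrightarrow> x + y \<noteq> 0 \<longrightarrow> v (x + y) \<ge> min (v x) (v y)) \<and>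
     (\<exists>u. u \<noteq> 0 \<and> v u = 1) \<and>
     (\<forall>s :: nat \<Rightarrow> 'f.
        (\<forall>N. \<exists>M. \<forall>m\<ge>M. \<forall>n\<ge>M. s m - s n \<in> vball v N) \<longrightarrow>
        (\<exists>L. \<forall>N. \<exists>M. \<forall>n\<ge>M. s n - L \<in> vball v N)) \<and>
     finite (residue_classes v) \<and>
     of_nat p \<in> vball v 1"

definition is_Fpbar :: "nat \<Rightarrow> 'k::field itself \<Rightarrow> bool" where
  "is_Fpbar p _ \<longleftrightarrow>
     prime p \<and> (of_nat p :: 'k) = 0 \<and>
     (\<forall>q :: 'k poly. degree q > 0 \<longrightarrow> (\<exists>x. poly q x = 0)) \<and>
     (\<forall>x :: 'k. \<exists>q :: 'k poly. q \<noteq> 0 \<and> (\<forall>i. coeff q i \<in> range of_nat) \<and> poly q x = 0)"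

datatype 'f m2 = M2 'f 'f 'f 'f  \<comment> \<open>M2 a b c d = (a b; c d)\<close>

fun m2mul :: "'f::field m2 \<Rightarrow> 'f m2 \<Rightarrow> 'f m2" where
  "m2mul (M2 a b c d) (M2 a' b' c' d') =
     M2 (a*a' + b*c') (a*b' + b*d') (c*a' + d*c') (c*b' + d*d')"

definition m2one :: "'f::field m2" where "m2one = M2 1 0 0 1"

fun m2det :: "'f::field m2 \<Rightarrow> 'f" where "m2det (M2 a b c d) = a*d - b*c"

definition GL2 :: "'f::field m2 set" where "GL2 = {g. m2det g \<noteq> 0}"

definition Borel :: "'f::field m2 set" where
  "Borel = {M2 a b 0 d | a b d. a \<noteq> 0 \<and> d \<noteq> 0}"

fun m2diag :: "'f::field m2 \<Rightarrow> 'f \<times> 'f" where "m2diag (M2 a b c d) = (a, d)"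

text \<open>Principal congruence subgroups K_n = 1 + M_2(m^n), n \<ge> 1; they form a
  basis of open neighbourhoods of 1 in G.\<close>
definition congr_sub :: "('f::field \<Rightarrow> int) \<Rightarrow> nat \<Rightarrow> 'f m2 set" where
  "congr_sub v n = {M2 a b c d | a b c d. M2 a b c d \<in> GL2 \<and>
      a - 1 \<in> vball v (int n) \<and> b \<in> vball v (int n) \<and>
      c \<in> vball v (int n) \<and> d - 1 \<in> vball v (int n)}"

text \<open>A smooth representation of G on the k-vector space 'v (scalar
  multiplication scale); act g is only meaningful for g in GL2.\<close>
definition smooth_rep ::
  "('f::field \<Rightarrow> int) \<Rightarrow> ('k::field \<Rightarrow> 'v::ab_group_add \<Rightarrow> 'v) \<Rightarrow> ('f m2 \<Rightarrow> 'v \<Rightarrow> 'v) \<Rightarrow> bool" where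
  "smooth_rep v scale act \<longleftrightarrow>
     vector_space scale \<and>
     (\<forall>g\<in>GL2. Vector_Spaces.linear scale scale (act g)) \<and>
     (\<forall>w. act m2one w = w) \<and>
     (\<forall>g\<in>GL2. \<forall>h\<in>GL2. \<forall>w. act (m2mul g h) w = act g (act h w)) \<and>
     (\<forall>w. \<exists>n\<ge>1. \<forall>g\<in>congr_sub v n. act g w = w)"

text \<open>A smooth character chi of T = F^x \<times> F^x (chi a d = value on diag(a,d)).\<close>
definition smooth_char_T :: "('f::field \<Rightarrow> int) \<Rightarrow> ('f \<Rightarrow> 'f \<Rightarrow> 'k::field) \<Rightarrow> bool" where
  "smooth_char_T v chi \<longleftrightarrow>
     (\<forall>a d. a \<noteq> 0 \<longrightarrow> d \<noteq> 0 \<longrightarrow> chi a d \<noteq> 0) \<and>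
     (\<forall>a d a' d'. a \<noteq> 0 \<longrightarrow> d \<noteq> 0 \<longrightarrow> a' \<noteq> 0 \<longrightarrow> d' \<noteq> 0 \<longrightarrow>
        chi (a * a') (d * d') = chi a d * chi a' d') \<and>
     (\<exists>n\<ge>1. \<forall>a d. a \<noteq> 0 \<longrightarrow> d \<noteq> 0 \<longrightarrow> a - 1 \<in> vball v (int n) \<longrightarrow>
        d - 1 \<in> vball v (int n) \<longrightarrow> chi a d = 1)"

text \<open>chi viewed as a character of P via P \<rightarrow> P/U = T.\<close>
definition inflate :: "('f::field \<Rightarrow> 'f \<Rightarrow> 'k) \<Rightarrow> 'f m2 \<Rightarrow> 'k" where
  "inflate chi g = (case m2diag g of (a, d) \<Rightarrow> chi a d)"

definition char_G :: "('f::field m2 \<Rightarrow> 'k::field) \<Rightarrow> bool" where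
  "char_G psi \<longleftrightarrow> (\<forall>g\<in>GL2. psi g \<noteq> 0) \<and>
     (\<forall>g\<in>GL2. \<forall>h\<in>GL2. psi (m2mul g h) = psi g * psi h)"

text \<open>Hom_H(theta, pi) for a subgroup H and a character theta of H (on the
  one-dimensional space k): k-linear H-equivariant maps k \<rightarrow> V.\<close>
definition Hom_char ::
  "'f::field m2 set \<Rightarrow> ('f m2 \<Rightarrow> 'k::field) \<Rightarrow> ('k \<Rightarrow> 'v::ab_group_add \<Rightarrow> 'v) \<Rightarrow>
   ('f m2 \<Rightarrow> 'v \<Rightarrow> 'v) \<Rightarrow> ('k \<Rightarrow> 'v) set" where
  "Hom_char H theta scale act =
     {f. Vector_Spaces.linear (*) scale f \<and>
         (\<forall>g\<in>H. \<forall>x. f (theta g * x) = act g (f x))}"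

end

theory Submission imports Defs begin

lemma chi11: assumes "smooth_char_T v chi" shows "chi 1 1 = 1"
proof -
  note cd = assms[unfolded smooth_char_T_def]
  have m: "chi (1*1) (1*1) = chi 1 1 * chi 1 1"
    using conjunct1[OF conjunct2[OF cd], rule_format, of 1 1 1 1] by simp
  have nz: "chi 1 1 \<noteq> 0" using conjunct1[OF cd, rule_format, of 1 1] by simp
  from m nz show ?thesis by simp
qed

lemma vpow: fixes v :: "'f::field \<Rightarrow> int" assumes "\<forall>x y. x \<noteq> 0 \<longrightarrow> y \<noteq> 0 \<longrightarrow> v (x * y) = v x + v y"
  and "u \<noteq> 0" "v u = 1" shows "v (u ^ Suc m) = int (Suc m)"
proof (induction m)
  case 0 then show ?case using assms by simp
next
  case (Suc m)
  have "v (u ^ Suc (Suc m)) = v (u * u ^ Suc m)" by simp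
  also have "\<dots> = v u + v (u ^ Suc m)" using assms by simp
  finally show ?case using Suc assms by simp
qed

lemma lin_scale: assumes "Vector_Spaces.linear s1 s2 f" shows "f (s1 r x) = s2 r (f x)"
  using assms unfolding linear_iff_module_hom by (rule module_hom.scale)

lemma det_mul: "m2det (m2mul g h) = m2det g * m2det h"
  by (cases g; cases h) (simp add: algebra_simps)

lemma Borel_iff: "M2 a b c d \<in> Borel \<longleftrightarrow> c = 0 \<and> a \<noteq> 0 \<and> d \<noteq> 0"
  unfolding Borel_def by auto

lemma Borel_GL2: "g \<in> Borel \<Longrightarrow> g \<in> GL2"
  unfolding Borel_def GL2_def by auto

lemma decomp: assumes "g \<in> GL2"
  shows "\<exists>b1 x b2. b1 \<in> Borel \<and> b2 \<in> Borel \<and> g = m2mul b1 (m2mul (M2 1 0 x 1) b2)"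
proof (cases g)
  case (M2 a b c d)
  have det: "a*d - b*c \<noteq> 0" using assms M2 unfolding GL2_def by simp
  show ?thesis
  proof (cases "a = 0")
    case False
    have "g = m2mul (M2 1 0 0 1) (m2mul (M2 1 0 (c/a) 1) (M2 a b 0 (d - b*c/a)))"
      using False M2 by (simp add: field_simps)
    moreover have "d - b*c/a \<noteq> 0" using False det by (simp add: field_simps)
    ultimately show ?thesis using False by (metis Borel_iff one_neq_zero)
  next
    case True
    then have bc: "b \<noteq> 0" "c \<noteq> 0" using det by auto
    have "g = m2mul (M2 1 (-1) 0 1) (m2mul (M2 1 0 1 1) (M2 c (b+d) 0 (-b)))"
      using True M2 by (simp add: field_simps)
    then show ?thesis using bc by (metis Borel_iff one_neq_zero neg_equal_0_iff_equal)
  qed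
qed


lemma GL2_mul: "g \<in> GL2 \<Longrightarrow> h \<in> GL2 \<Longrightarrow> m2mul g h \<in> GL2"
  unfolding GL2_def by (simp add: det_mul)

lemma lo_GL2: "M2 1 0 x 1 \<in> GL2"
  unfolding GL2_def by simp

lemma inflate_M2: "inflate chi (M2 a b c d) = chi a d"
  unfolding inflate_def by simp

theorem lemma5p1:
  fixes v :: "'f::field \<Rightarrow> int" and p :: nat
    and chi :: "'f \<Rightarrow> 'f \<Rightarrow> 'k::field"
    and scale :: "'k \<Rightarrow> 'v::ab_group_add \<Rightarrow> 'v"
    and act :: "'f m2 \<Rightarrow> 'v \<Rightarrow> 'v"
  assumes F: "nonarch_local_field v p"
    and k: "is_Fpbar p TYPE('k)"
    and chi: "smooth_char_T v chi"
    and pi: "smooth_rep v scale act"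
    and nz: "\<exists>f\<in>Hom_char Borel (inflate chi) scale act. f \<noteq> (\<lambda>_. 0)"
  shows "(\<exists>psi. char_G psi \<and> (\<forall>g\<in>Borel. psi g = inflate chi g)) \<and>
         (\<forall>psi1 psi2. char_G psi1 \<and> (\<forall>g\<in>Borel. psi1 g = inflate chi g) \<and>
                      char_G psi2 \<and> (\<forall>g\<in>Borel. psi2 g = inflate chi g) \<longrightarrow>
                      (\<forall>g\<in>GL2. psi1 g = psi2 g)) \<and>
         (\<forall>psi. char_G psi \<and> (\<forall>g\<in>Borel. psi g = inflate chi g) \<longrightarrow>
                Hom_char Borel (inflate chi) scale act = Hom_char GL2 psi scale act)"
proof -
  have VS: "vector_space scale" and lin: "\<And>g. g \<in> GL2 \<Longrightarrow> Vector_Spaces.linear scale scale (act g)"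
    and one: "\<And>w. act m2one w = w"
    and comp: "\<And>g h w. g \<in> GL2 \<Longrightarrow> h \<in> GL2 \<Longrightarrow> act (m2mul g h) w = act g (act h w)"
    and sm: "\<And>w. \<exists>n\<ge>1. \<forall>g\<in>congr_sub v n. act g w = w"
    using pi[unfolded smooth_rep_def] by simp_all
  interpret V: vector_space scale by (rule VS)
  note Fd = F[unfolded nonarch_local_field_def]
  have vmul: "\<forall>x y. x \<noteq> 0 \<longrightarrow> y \<noteq> 0 \<longrightarrow> v (x * y) = v x + v y"
    by (rule conjunct1[OF conjunct2[OF Fd]])
  have "\<exists>u. u \<noteq> 0 \<and> v u = 1" by (rule conjunct1[OF conjunct2[OF conjunct2[OF conjunct2[OF Fd]]]])
  then obtain u where u: "u \<noteq> 0" "v u = 1" by blast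
  have chinz: "\<And>a d. a \<noteq> 0 \<Longrightarrow> d \<noteq> 0 \<Longrightarrow> chi a d \<noteq> 0"
    and chimul: "\<And>a d a' d'. a \<noteq> 0 \<Longrightarrow> d \<noteq> 0 \<Longrightarrow> a' \<noteq> 0 \<Longrightarrow> d' \<noteq> 0 \<Longrightarrow>
        chi (a * a') (d * d') = chi a d * chi a' d'"
    using conjunct1[OF chi[unfolded smooth_char_T_def], rule_format]
      conjunct1[OF conjunct2[OF chi[unfolded smooth_char_T_def]], rule_format] by auto
  have c11: "chi 1 1 = 1" using chi by (rule chi11)
  have comp3: "act (m2mul A (m2mul B C)) z = act A (act B (act C z))"
    if "A \<in> GL2" "B \<in> GL2" "C \<in> GL2" for A B C z
    using comp[OF that(1) GL2_mul[OF that(2,3)]] comp[OF that(2,3)] by simp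
  have actscale: "\<And>g r w. g \<in> GL2 \<Longrightarrow> act g (scale r w) = scale r (act g w)"
    using lin_scale[OF lin] by blast
  have lofix: "act (M2 1 0 c 1) w = w" if eig: "\<forall>b\<in>Borel. act b w = scale (inflate chi b) w" for w c
  proof (cases "c = 0")
    case True then show ?thesis using one by (simp add: m2one_def)
  next
    case False
    obtain n where n: "n \<ge> 1" "\<forall>g\<in>congr_sub v n. act g w = w" using sm by blast
    obtain m where m: "n = Suc m" using n(1) by (cases n) auto
    define e where "e = u ^ n"
    have e0: "e \<noteq> 0" using u by (simp add: e_def)
    have ve: "v e = int n" unfolding e_def m using vpow[OF vmul u] .
    define t where "t = c / e"
    have t0: "t \<noteq> 0" using False e0 by (simp add: t_def)
    have dec: "M2 1 0 c 1 = m2mul (M2 (1/t) 0 0 1) (m2mul (M2 1 0 e 1) (M2 t 0 0 1))"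
      using t0 e0 by (simp add: t_def field_simps)
    have inK: "M2 1 0 e 1 \<in> congr_sub v n"
      unfolding congr_sub_def using ve lo_GL2 by (auto simp: vball_def)
    have B1: "M2 (1/t) 0 0 1 \<in> Borel" and B2: "M2 t 0 0 1 \<in> Borel"
      using t0 by (auto simp: Borel_iff)
    have "act (M2 1 0 c 1) w = act (M2 (1/t) 0 0 1) (act (M2 1 0 e 1) (act (M2 t 0 0 1) w))"
      unfolding dec by (rule comp3[OF Borel_GL2[OF B1] lo_GL2 Borel_GL2[OF B2]])
    also have "\<dots> = act (M2 (1/t) 0 0 1) (act (M2 1 0 e 1) (scale (chi t 1) w))"
      using eig B2 by (simp add: inflate_M2)
    also have "\<dots> = act (M2 (1/t) 0 0 1) (scale (chi t 1) w)"
      using actscale[OF lo_GL2] n(2) inK by simp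
    also have "\<dots> = scale (chi t 1) (scale (chi (1/t) 1) w)"
      using actscale[OF Borel_GL2[OF B1]] eig B1 by (simp add: inflate_M2)
    also have "\<dots> = scale (chi (t * (1/t)) (1*1)) w"
      using chimul[of t 1 "1/t" 1] t0 by (simp add: mult.commute)
    also have "\<dots> = w" using t0 c11 by simp
    finally show ?thesis .
  qed
  have Hw: "(\<forall>x. h x = scale x (h 1)) \<and> (\<forall>b\<in>Borel. act b (h 1) = scale (inflate chi b) (h 1))"
    if "h \<in> Hom_char Borel (inflate chi) scale act" for h
  proof -
    have hl: "Vector_Spaces.linear (*) scale h" and he: "\<forall>g\<in>Borel. \<forall>x. h (inflate chi g * x) = act g (h x)"
      using that unfolding Hom_char_def by auto
    have 1: "h x = scale x (h 1)" for x using lin_scale[OF hl, of x 1] by simp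
    have "act b (h 1) = scale (inflate chi b) (h 1)" if "b \<in> Borel" for b
    proof -
      have "h (inflate chi b * 1) = act b (h 1)" using he that by blast
      then have "act b (h 1) = h (inflate chi b * 1)" by simp
      also have "\<dots> = scale (inflate chi b) (h 1)" using 1[of "inflate chi b"] by simp
      finally show ?thesis .
    qed
    then show ?thesis using 1 by blast
  qed
  obtain f where fH: "f \<in> Hom_char Borel (inflate chi) scale act" and fnz: "f \<noteq> (\<lambda>_. 0)"
    using nz by blast
  define w where "w = f 1"
  have fw: "\<And>x. f x = scale x w" and weig: "\<forall>b\<in>Borel. act b w = scale (inflate chi b) w"
    using Hw[OF fH] unfolding w_def by blast+
  have w0: "w \<noteq> 0"
  proof
    assume "w = 0"
    then have "f = (\<lambda>_. 0)" using fw by (intro ext) simp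
    then show False using fnz by simp
  qed
  have key: "chi (1/s) s = 1" if s0: "s \<noteq> 0" for s
  proof -
    define x where "x = s - 1"
    define y where "y = 1/s - 1"
    have dec: "M2 (1/s) 1 0 s = m2mul (M2 1 0 x 1) (m2mul (M2 1 1 0 1) (M2 1 0 y 1))"
      using s0 by (simp add: x_def y_def field_simps)
    have Bs: "M2 (1/s) 1 0 s \<in> Borel" and Bu: "M2 1 1 0 1 \<in> Borel" using s0 by (auto simp: Borel_iff)
    have "scale (chi (1/s) s) w = act (M2 (1/s) 1 0 s) w" using weig Bs by (simp add: inflate_M2)
    also have "\<dots> = act (M2 1 0 x 1) (act (M2 1 1 0 1) (act (M2 1 0 y 1) w))"
      unfolding dec by (rule comp3[OF lo_GL2 Borel_GL2[OF Bu] lo_GL2])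
    also have "\<dots> = w" using lofix[OF weig] weig[rule_format, OF Bu] c11 by (simp add: inflate_M2)
    finally have "scale (chi (1/s) s) w = scale 1 w" by simp
    then show ?thesis by (rule V.scale_right_imp_eq[OF w0])
  qed
  have chiT: "chi a d = chi (a*d) 1" if "a \<noteq> 0" "d \<noteq> 0" for a d
  proof -
    have "chi (a*d*(1/d)) (1*d) = chi (a*d) 1 * chi (1/d) d"
      using chimul[of "a*d" 1 "1/d" d] that by simp
    then show ?thesis using key[of d] that by simp
  qed
  have psi_lo: "psi (M2 1 0 x 1) = 1"
    if "char_G psi" "\<forall>g\<in>Borel. psi g = inflate chi g" for psi x
  proof -
    have W: "M2 0 1 1 0 \<in> GL2" by (simp add: GL2_def)
    have eq: "m2mul (M2 0 1 1 0) (M2 1 0 x 1) = m2mul (M2 1 x 0 1) (M2 0 1 1 0)" by simp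
    have Bu: "M2 1 x 0 1 \<in> Borel" by (simp add: Borel_iff)
    have m: "\<And>g h. g \<in> GL2 \<Longrightarrow> h \<in> GL2 \<Longrightarrow> psi (m2mul g h) = psi g * psi h"
      using that(1) unfolding char_G_def by blast
    have nzW: "psi (M2 0 1 1 0) \<noteq> 0" using that(1) W unfolding char_G_def by blast
    have "psi (M2 1 x 0 1) = inflate chi (M2 1 x 0 1)" using that(2) Bu by blast
    then have pu: "psi (M2 1 x 0 1) = 1" using c11 by (simp add: inflate_M2)
    have "psi (M2 0 1 1 0) * psi (M2 1 0 x 1) = psi (m2mul (M2 0 1 1 0) (M2 1 0 x 1))"
      using m[OF W lo_GL2] by (rule sym)
    also have "\<dots> = psi (m2mul (M2 1 x 0 1) (M2 0 1 1 0))" using eq by (rule arg_cong)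
    also have "\<dots> = psi (M2 1 x 0 1) * psi (M2 0 1 1 0)" by (rule m[OF Borel_GL2[OF Bu] W])
    also have "\<dots> = psi (M2 0 1 1 0) * 1" using pu by simp
    finally show ?thesis using nzW by (metis mult_cancel_left)
  qed
  have psi_val: "psi g = inflate chi b1 * inflate chi b2"
    if "char_G psi" "\<forall>g\<in>Borel. psi g = inflate chi g" "b1 \<in> Borel" "b2 \<in> Borel"
       "g = m2mul b1 (m2mul (M2 1 0 x 1) b2)" for psi g b1 b2 x
  proof -
    have m: "\<And>g h. g \<in> GL2 \<Longrightarrow> h \<in> GL2 \<Longrightarrow> psi (m2mul g h) = psi g * psi h"
      using that(1) unfolding char_G_def by blast
    have "psi g = psi b1 * (psi (M2 1 0 x 1) * psi b2)"
      unfolding that(5) using m[OF Borel_GL2[OF that(3)] GL2_mul[OF lo_GL2 Borel_GL2[OF that(4)]]]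
        m[OF lo_GL2 Borel_GL2[OF that(4)]] by simp
    then show ?thesis using psi_lo[OF that(1,2)] that(2,3,4) by simp
  qed
  have P1: "\<exists>psi. char_G psi \<and> (\<forall>g\<in>Borel. psi g = inflate chi g)"
  proof (intro exI conjI)
    show "char_G (\<lambda>g. chi (m2det g) 1)"
      unfolding char_G_def
    proof (intro conjI ballI)
      fix g h :: "'f m2" assume g: "g \<in> GL2" and h: "h \<in> GL2"
      have "m2det g \<noteq> 0" "m2det h \<noteq> 0" using g h by (auto simp: GL2_def)
      then show "chi (m2det (m2mul g h)) 1 = chi (m2det g) 1 * chi (m2det h) 1"
        using chimul[of "m2det g" 1 "m2det h" 1] by (simp add: det_mul)
    next
      fix g :: "'f m2" assume g: "g \<in> GL2"
      then show "chi (m2det g) 1 \<noteq> 0" using chinz by (simp add: GL2_def)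
    qed
    show "\<forall>g\<in>Borel. chi (m2det g) 1 = inflate chi g"
    proof
      fix g :: "'f m2" assume "g \<in> Borel"
      then obtain a b d where g: "g = M2 a b 0 d" "a \<noteq> 0" "d \<noteq> 0" unfolding Borel_def by blast
      show "chi (m2det g) 1 = inflate chi g" unfolding g(1) inflate_M2 m2det.simps
        using chiT[OF g(2,3)] by simp
    qed
  qed
  have P2: "\<forall>psi1 psi2. char_G psi1 \<and> (\<forall>g\<in>Borel. psi1 g = inflate chi g) \<and>
                      char_G psi2 \<and> (\<forall>g\<in>Borel. psi2 g = inflate chi g) \<longrightarrow>
                      (\<forall>g\<in>GL2. psi1 g = psi2 g)"
  proof (intro allI impI ballI)
    fix psi1 psi2 :: "'f m2 \<Rightarrow> 'k" and g :: "'f m2" assume A: "char_G psi1 \<and> (\<forall>g\<in>Borel. psi1 g = inflate chi g) \<and>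
                      char_G psi2 \<and> (\<forall>g\<in>Borel. psi2 g = inflate chi g)" and g: "g \<in> GL2"
    obtain b1 x b2 where d: "b1 \<in> Borel" "b2 \<in> Borel" "g = m2mul b1 (m2mul (M2 1 0 x 1) b2)"
      using decomp[OF g] by blast
    have a1: "char_G psi1" and a2: "\<forall>g\<in>Borel. psi1 g = inflate chi g"
      and a3: "char_G psi2" and a4: "\<forall>g\<in>Borel. psi2 g = inflate chi g" using A by blast+
    show "psi1 g = psi2 g" using psi_val[OF a1 a2 d] psi_val[OF a3 a4 d] by (rule trans[OF _ sym])
  qed
  have P3: "Hom_char Borel (inflate chi) scale act = Hom_char GL2 psi scale act"
    if ps: "char_G psi" "\<forall>g\<in>Borel. psi g = inflate chi g" for psi
  proof
    show "Hom_char GL2 psi scale act \<subseteq> Hom_char Borel (inflate chi) scale act"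
    proof
      fix h assume "h \<in> Hom_char GL2 psi scale act"
      then have l: "Vector_Spaces.linear (*) scale h"
        and e: "\<forall>g\<in>GL2. \<forall>x. h (psi g * x) = act g (h x)" unfolding Hom_char_def by blast+
      have "\<forall>g\<in>Borel. \<forall>x. h (inflate chi g * x) = act g (h x)"
      proof (intro ballI allI)
        fix g :: "'f m2" and x :: 'k assume gB: "g \<in> Borel"
        have pg: "psi g = inflate chi g" using ps(2) gB by blast
        show "h (inflate chi g * x) = act g (h x)"
          using e[rule_format, OF Borel_GL2[OF gB], of x] unfolding pg .
      qed
      then show "h \<in> Hom_char Borel (inflate chi) scale act" using l unfolding Hom_char_def by blast
    qed
  next
    show "Hom_char Borel (inflate chi) scale act \<subseteq> Hom_char GL2 psi scale act"
    proof
      fix h assume hH: "h \<in> Hom_char Borel (inflate chi) scale act"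
      define z where "z = h 1"
      have hz: "\<And>x. h x = scale x z" and zeig: "\<forall>b\<in>Borel. act b z = scale (inflate chi b) z"
        using Hw[OF hH] unfolding z_def by blast+
      have gz: "act g z = scale (psi g) z" if g: "g \<in> GL2" for g
      proof -
        obtain b1 x b2 where d: "b1 \<in> Borel" "b2 \<in> Borel" "g = m2mul b1 (m2mul (M2 1 0 x 1) b2)"
          using decomp[OF g] by blast
        have "act g z = act b1 (act (M2 1 0 x 1) (act b2 z))"
          unfolding d(3) by (rule comp3[OF Borel_GL2[OF d(1)] lo_GL2 Borel_GL2[OF d(2)]])
        also have "\<dots> = act b1 (scale (inflate chi b2) z)"
          using zeig d actscale[OF lo_GL2] lofix[OF zeig] by simp
        also have "\<dots> = scale (inflate chi b1 * inflate chi b2) z"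
          using zeig d actscale[OF Borel_GL2] by (simp add: mult.commute)
        also have "\<dots> = scale (psi g) z" using psi_val[OF ps d] by simp
        finally show ?thesis .
      qed
      show "h \<in> Hom_char GL2 psi scale act"
        unfolding Hom_char_def
      proof (intro CollectI conjI ballI allI)
        show "Vector_Spaces.linear (*) scale h" using hH unfolding Hom_char_def by simp
        fix g :: "'f m2" and x :: 'k assume g: "g \<in> GL2"
        show "h (psi g * x) = act g (h x)"
          using hz gz[OF g] actscale[OF g] by (simp add: mult.commute)
      qed
    qed
  qed
  show ?thesis using P1 P2 P3 by blast
qed

end
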